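(* Let $(X,T)$ be a CAM $G$-system and let $H\subseteq G$ be a finite index normal subgroup. If there exists $x\in X$ whose $H$-orbit is dense in $X$, then the restricted action of $H$ on $X$ is CAM.
   Context: Let $G$ be a countable discrete group. A topological $G$-system $(X,T)$ consists of a compact metric space $X$ and an action $T\colon G\to\mathrm{Homeo}(X)$, $g\mapsto T_g$. The system is topologically transitive if for all nonempty open $U,V\subseteq X$ there is $g\in G$ with $T_gU\cap V\neq\emptyset$; the action is faithful if $T_g=\mathrm{id}_X$ only when $g$ is the identity. A point is periodic if its $G$-orbit is finite. The system is chaotic almost minimal (CAM) if: (1) it is topologically transitive and the action is faithful; (2) the periodic points are dense in $X$; (3) every proper closed $T$-invariant subset of $X$ is finite. *)

theory Defs
  imports "HOL-Analysis.Analysis" "HOL-Algebra.Coset"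
begin

definition topsys :: "('g, 'm) monoid_scheme \<Rightarrow> 'a::metric_space set \<Rightarrow> ('g \<Rightarrow> 'a \<Rightarrow> 'a) \<Rightarrow> bool" where
  "topsys G X T \<longleftrightarrow> group G \<and> countable (carrier G) \<and> compact X \<and>
     (\<forall>g\<in>carrier G. homeomorphism X X (T g) (T (inv\<^bsub>G\<^esub> g))) \<and>
     (\<forall>x\<in>X. T \<one>\<^bsub>G\<^esub> x = x) \<and>
     (\<forall>g\<in>carrier G. \<forall>h\<in>carrier G. \<forall>x\<in>X. T (g \<otimes>\<^bsub>G\<^esub> h) x = T g (T h x))"

definition top_transitive :: "('g, 'm) monoid_scheme \<Rightarrow> 'a::metric_space set \<Rightarrow> ('g \<Rightarrow> 'a \<Rightarrow> 'a) \<Rightarrow> bool" where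
  "top_transitive G X T \<longleftrightarrow>
     (\<forall>U V. openin (top_of_set X) U \<and> openin (top_of_set X) V \<and> U \<noteq> {} \<and> V \<noteq> {} \<longrightarrow>
        (\<exists>g\<in>carrier G. T g ` U \<inter> V \<noteq> {}))"

definition faithful_action :: "('g, 'm) monoid_scheme \<Rightarrow> 'a set \<Rightarrow> ('g \<Rightarrow> 'a \<Rightarrow> 'a) \<Rightarrow> bool" where
  "faithful_action G X T \<longleftrightarrow> (\<forall>g\<in>carrier G. (\<forall>x\<in>X. T g x = x) \<longrightarrow> g = \<one>\<^bsub>G\<^esub>)"

definition orbit :: "('g, 'm) monoid_scheme \<Rightarrow> ('g \<Rightarrow> 'a \<Rightarrow> 'a) \<Rightarrow> 'a \<Rightarrow> 'a set" where
  "orbit G T x = (\<lambda>g. T g x) ` carrier G"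

definition periodic_points :: "('g, 'm) monoid_scheme \<Rightarrow> 'a set \<Rightarrow> ('g \<Rightarrow> 'a \<Rightarrow> 'a) \<Rightarrow> 'a set" where
  "periodic_points G X T = {x\<in>X. finite (orbit G T x)}"

definition invariant_set :: "('g, 'm) monoid_scheme \<Rightarrow> 'a set \<Rightarrow> ('g \<Rightarrow> 'a \<Rightarrow> 'a) \<Rightarrow> 'a set \<Rightarrow> bool" where
  "invariant_set G X T A \<longleftrightarrow> A \<subseteq> X \<and> (\<forall>g\<in>carrier G. T g ` A \<subseteq> A)"

definition CAM :: "('g, 'm) monoid_scheme \<Rightarrow> 'a::metric_space set \<Rightarrow> ('g \<Rightarrow> 'a \<Rightarrow> 'a) \<Rightarrow> bool" where
  "CAM G X T \<longleftrightarrow> topsys G X T \<and>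
     top_transitive G X T \<and> faithful_action G X T \<and>
     X \<subseteq> closure (periodic_points G X T) \<and>
     (\<forall>A. closed A \<and> invariant_set G X T A \<and> A \<noteq> X \<longrightarrow> finite A)"

end

theory Submission
  imports Defs
begin

theorem corollary3p6:
  fixes G :: "('g, 'm) monoid_scheme" and X :: "'a::metric_space set" and T :: "'g \<Rightarrow> 'a \<Rightarrow> 'a"
    and H :: "'g set"
  assumes "CAM G X T"
    and "H \<lhd> G"
    and "finite (rcosets\<^bsub>G\<^esub> H)"
    and "x \<in> X" and "closure (orbit (G\<lparr>carrier := H\<rparr>) T x) = X"
  shows "CAM (G\<lparr>carrier := H\<rparr>) X T"
proof -
  note cam = assms(1)[unfolded CAM_def]
  have ts: "topsys G X T" using cam by blast
  hence grp: "group G" and cnt: "countable (carrier G)" and cpt: "compact X"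
    and hom: "\<And>g. g \<in> carrier G \<Longrightarrow> homeomorphism X X (T g) (T (inv\<^bsub>G\<^esub> g))"
    and one: "\<And>y. y \<in> X \<Longrightarrow> T \<one>\<^bsub>G\<^esub> y = y"
    and mul: "\<And>g h y. g \<in> carrier G \<Longrightarrow> h \<in> carrier G \<Longrightarrow> y \<in> X \<Longrightarrow> T (g \<otimes>\<^bsub>G\<^esub> h) y = T g (T h y)"
    unfolding topsys_def by blast+
  interpret N: normal H G by (rule assms(2))
  have sg: "subgroup H G" by (rule N.subgroup_axioms)
  have HG: "H \<subseteq> carrier G" using sg subgroup.subset by blast
  have maps: "\<And>g y. g \<in> carrier G \<Longrightarrow> y \<in> X \<Longrightarrow> T g y \<in> X"
    using hom unfolding homeomorphism_def by blast
  have invc: "\<And>g. g \<in> H \<Longrightarrow> inv\<^bsub>G\<lparr>carrier := H\<rparr>\<^esub> g = inv\<^bsub>G\<^esub> g"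
    using group.m_inv_consistent[OF grp sg] by blast
  let ?H = "G\<lparr>carrier := H\<rparr>"
  have ts': "topsys ?H X T"
    unfolding topsys_def
  proof (intro conjI ballI)
    show "group ?H" using subgroup.subgroup_is_group[OF sg grp] .
    show "countable (carrier ?H)" using cnt HG countable_subset by auto
    show "compact X" by fact
    fix g assume "g \<in> carrier ?H"
    thus "homeomorphism X X (T g) (T (inv\<^bsub>?H\<^esub> g))" using invc hom HG by auto
  next
    fix y assume "y \<in> X" thus "T \<one>\<^bsub>?H\<^esub> y = y" using one by simp
  next
    fix g h y assume "g \<in> carrier ?H" "h \<in> carrier ?H" "y \<in> X"
    thus "T (g \<otimes>\<^bsub>?H\<^esub> h) y = T g (T h y)" using mul HG by auto
  qed
  have orbX: "orbit ?H T x \<subseteq> X" using maps HG assms(4) unfolding orbit_def by auto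
  have tt: "top_transitive ?H X T"
    unfolding top_transitive_def
  proof (intro allI impI)
    fix U V assume UV: "openin (top_of_set X) U \<and> openin (top_of_set X) V \<and> U \<noteq> {} \<and> V \<noteq> {}"
    have meet: "\<exists>h\<in>H. T h x \<in> W" if W: "openin (top_of_set X) W" "W \<noteq> {}" for W
    proof -
      obtain Op where O: "open Op" "W = X \<inter> Op" using W(1) by (auto simp: openin_open)
      obtain w where w: "w \<in> W" using W(2) by blast
      hence "w \<in> closure (orbit ?H T x)" using O assms(5) by auto
      then obtain z where "z \<in> orbit ?H T x" "z \<in> Op"
        using O w by (meson closure_iff_nhds_not_empty disjoint_iff IntD2 order_refl)
      thus ?thesis using orbX O unfolding orbit_def by auto
    qed
    obtain h1 where h1: "h1 \<in> H" "T h1 x \<in> U" using meet UV by blast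
    obtain h2 where h2: "h2 \<in> H" "T h2 x \<in> V" using meet UV by blast
    have "h2 \<otimes>\<^bsub>G\<^esub> inv\<^bsub>G\<^esub> h1 \<in> H" using h1 h2 sg by (simp add: subgroup.m_closed subgroup.m_inv_closed)
    moreover have "T (h2 \<otimes>\<^bsub>G\<^esub> inv\<^bsub>G\<^esub> h1) (T h1 x) = T h2 x"
    proof -
      have "T (h2 \<otimes>\<^bsub>G\<^esub> inv\<^bsub>G\<^esub> h1) (T h1 x) = T ((h2 \<otimes>\<^bsub>G\<^esub> inv\<^bsub>G\<^esub> h1) \<otimes>\<^bsub>G\<^esub> h1) x"
        using mul h1 h2 HG assms(4) grp by (simp add: subsetD group.subgroup_self)
      also have "(h2 \<otimes>\<^bsub>G\<^esub> inv\<^bsub>G\<^esub> h1) \<otimes>\<^bsub>G\<^esub> h1 = h2"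
        using h1 h2 HG by (simp add: subsetD N.m_assoc)
      finally show ?thesis .
    qed
    ultimately show "\<exists>g\<in>carrier ?H. T g ` U \<inter> V \<noteq> {}"
      using h1 h2 by (intro bexI[of _ "h2 \<otimes>\<^bsub>G\<^esub> inv\<^bsub>G\<^esub> h1"]) auto
  qed

  have fa: "faithful_action ?H X T"
    using cam HG unfolding faithful_action_def by auto
  have per: "periodic_points G X T \<subseteq> periodic_points ?H X T"
    unfolding periodic_points_def orbit_def using HG by (auto elim: finite_subset[rotated] intro: image_mono)
  have dense: "X \<subseteq> closure (periodic_points ?H X T)"
    using cam per closure_mono by blast
  have clos: "\<And>g. g \<in> carrier G \<Longrightarrow> closed A \<Longrightarrow> A \<subseteq> X \<Longrightarrow> closed (T g ` A)" for A
  proof -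
    fix g A assume g: "g \<in> carrier G" and A: "closed A" "A \<subseteq> X"
    have "continuous_on X (T g)" using hom[OF g] unfolding homeomorphism_def by blast
    moreover have "compact A" using A cpt closed_Int_compact[of A X] by (simp add: Int_absorb2)
    ultimately have "compact (T g ` A)" using A(2) compact_continuous_image continuous_on_subset by blast
    thus "closed (T g ` A)" by (rule compact_imp_closed)
  qed
  have inj: "\<And>g. g \<in> carrier G \<Longrightarrow> inj_on (T g) X"
    using hom by (metis homeomorphism_apply1 inj_on_inverseI)
  have fin: "finite A" if A: "closed A" "invariant_set ?H X T A" "A \<noteq> X" for A
  proof -
    have AX: "A \<subseteq> X" and Ainv: "\<And>h a. h \<in> H \<Longrightarrow> a \<in> A \<Longrightarrow> T h a \<in> A"
      using A(2) unfolding invariant_set_def by auto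
    have Hinv: "T h (T g a) \<in> T g ` A" if "h \<in> H" "g \<in> carrier G" "a \<in> A" for h g a
    proof -
      have k: "inv\<^bsub>G\<^esub> g \<otimes>\<^bsub>G\<^esub> h \<otimes>\<^bsub>G\<^esub> g \<in> H" using N.inv_op_closed1 that by blast
      have "g \<otimes>\<^bsub>G\<^esub> (inv\<^bsub>G\<^esub> g \<otimes>\<^bsub>G\<^esub> h \<otimes>\<^bsub>G\<^esub> g) = h \<otimes>\<^bsub>G\<^esub> g"
        using that HG by (simp add: subsetD N.m_assoc[symmetric])
      hence "T h (T g a) = T g (T (inv\<^bsub>G\<^esub> g \<otimes>\<^bsub>G\<^esub> h \<otimes>\<^bsub>G\<^esub> g) a)"
        using mul that HG k AX by (metis subsetD)
      thus ?thesis using Ainv k that by blast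
    qed
    define B where "B = (\<Union>g\<in>carrier G. T g ` A)"
    have AB: "A \<subseteq> B" unfolding B_def using one AX by force
    have BX: "B \<subseteq> X" unfolding B_def using maps AX by auto
    have Binv: "invariant_set G X T B"
      unfolding invariant_set_def
    proof (intro conjI ballI BX)
      fix g assume g: "g \<in> carrier G"
      show "T g ` B \<subseteq> B"
      proof
        fix y assume "y \<in> T g ` B"
        then obtain g' a where "g' \<in> carrier G" "a \<in> A" "y = T g (T g' a)" unfolding B_def by auto
        thus "y \<in> B" unfolding B_def using mul g AX by (metis N.m_closed UN_iff image_eqI subsetD)
      qed
    qed
    have piece: "(\<Union>g\<in>C. T g ` A) = T g0 ` A" if pc: "C = H #>\<^bsub>G\<^esub> g0" "g0 \<in> carrier G" for C g0
    proof
      show "(\<Union>g\<in>C. T g ` A) \<subseteq> T g0 ` A"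
      proof
        fix y assume "y \<in> (\<Union>g\<in>C. T g ` A)"
        then obtain h a where "h \<in> H" "a \<in> A" "y = T (h \<otimes>\<^bsub>G\<^esub> g0) a"
          using pc unfolding r_coset_def by auto
        thus "y \<in> T g0 ` A" using mul Hinv pc HG AX by (metis subsetD)
      qed
      show "T g0 ` A \<subseteq> (\<Union>g\<in>C. T g ` A)"
      proof -
        have "g0 \<in> C" using pc N.one_closed unfolding r_coset_def by force
        thus ?thesis by blast
      qed
    qed
    have "B = (\<Union>C\<in>rcosets\<^bsub>G\<^esub> H. \<Union>g\<in>C. T g ` A)"
      unfolding B_def using N.rcosets_part_G[OF sg] by blast
    moreover have "\<forall>C\<in>rcosets\<^bsub>G\<^esub> H. closed (\<Union>g\<in>C. T g ` A)"
    proof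
      fix C assume "C \<in> rcosets\<^bsub>G\<^esub> H"
      then obtain g0 where "g0 \<in> carrier G" "C = H #>\<^bsub>G\<^esub> g0" unfolding RCOSETS_def by auto
      thus "closed (\<Union>g\<in>C. T g ` A)" using piece clos A(1) AX by metis
    qed
    ultimately have Bc: "closed B" using assms(3) by (simp add: closed_UN)
    show ?thesis
    proof (cases "B = X")
      case False
      hence "finite B" using cam Bc Binv by blast
      thus ?thesis using AB finite_subset by blast
    next
      case True
      then obtain g where g: "g \<in> carrier G" "x \<in> T g ` A" using assms(4) unfolding B_def by auto
      have "orbit ?H T x \<subseteq> T g ` A" unfolding orbit_def using g Hinv by auto
      hence "X \<subseteq> T g ` A" using assms(5) clos[OF g(1) A(1) AX] closure_minimal by blast
      have "X \<subseteq> A"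
      proof
        fix y assume y: "y \<in> X"
        then obtain a where a: "a \<in> A" "T g y = T g a" using \<open>X \<subseteq> T g ` A\<close> maps g by blast
        thus "y \<in> A" using inj[OF g(1)] y AX by (metis inj_onD subsetD)
      qed
      thus ?thesis using AX A(3) by blast
    qed
  qed
  show ?thesis unfolding CAM_def using ts' tt fa dense fin by blast
qed

end
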